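(* Let $k>1$ be an integer with $k\equiv 1\pmod 4$, and let $\mathrm{SG}(n)$ denote the Sprague--Grundy value of a pile of $n$ tokens in the game $i\textsc{-Mark}(\{2\},\{k\})$. Let $b=2k$, $c_0=4k$, $c_m=k(c_{m-1}+2)$ for $m\ge1$, and $a_0=k$, $a_m=k(a_{m-1}+2)$ for $m\ge 1$ (so that $a_0<b<c_0<a_1<c_1<a_2<\cdots$). Let $X=[0,a_0-1]$, $Y=[a_0+1,b-1]$, $Z=[b+1,c_0-1]$, and for $m\ge 1$ let $A_m=[c_{m-1}+1,a_m-1]$ and $C_m=[a_m+1,c_m-1]$ (integer intervals). Then: (1) $\mathrm{SG}(b)=2$, and $\mathrm{SG}(a_m)=\mathrm{SG}(c_m)=2$ for all $m\ge 0$; (2) the sequence of SG values of the elements of $X$, in increasing order, is $(0,0,1,1)^{z},0$ with $z=(a_0-1)/4$; (3) the sequence of SG values of the elements of $Y$ is $(1,0,0,1)^{z'}$ with $z'=(b-a_0-1)/4$; (4) the sequence of SG values of the elements of $Z$ is $(0,0,1,1)^{z''},0$ with $z''=(c_0-b-2)/4$; (5) for every $m\ge 1$, the sequence of SG values of the elements of $A_m$ is $(1,0,0,1)^{y_m},1,0$ with $y_m=(a_m-c_{m-1}-3)/4$; (6) for every $m\ge 1$, the sequence of SG values of the elements of $C_m$ is $(1,0,0,1)^{y'_m},1,0$ with $y'_m=(c_m-a_m-3)/4$. Here $X^z$ denotes the $z$-fold concatenation of the finite sequence $X$.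
   Context: For a nonempty set $S$ of positive integers and a nonempty set $D$ of integers larger than $1$, the impartial game $i\textsc{-Mark}(S,D)$ is played on a single pile of $n\ge 0$ tokens: a move either replaces $n$ by $n-s$ for some $s\in S$ with $s\le n$, or replaces $n$ by $n/d$ for some $d\in D$ dividing $n$ (with $n>0$). The Sprague--Grundy value is defined recursively by $\mathrm{SG}(n)=\mathrm{mex}\{\mathrm{SG}(w): w \text{ an option of } n\}$, where $\mathrm{mex}(T)$ is the smallest nonnegative integer not in $T$. *)

theory Defs
  imports Main
begin

definition mex :: "nat set \<Rightarrow> nat" where
  "mex T = (LEAST x. x \<notin> T)"

definition is_option :: "nat set \<Rightarrow> nat set \<Rightarrow> nat \<Rightarrow> nat \<Rightarrow> bool" where
  "is_option S D n w \<longleftrightarrow>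
     (\<exists>s\<in>S. s \<le> n \<and> w = n - s) \<or> (\<exists>d\<in>D. n > 0 \<and> d dvd n \<and> w = n div d)"

text \<open>Sprague-Grundy value. For S of positive integers and D of integers > 1 every
  option is strictly smaller than n, so the guard w < n is vacuous there.\<close>
function SG :: "nat set \<Rightarrow> nat set \<Rightarrow> nat \<Rightarrow> nat" where
  "SG S D n = mex ((\<lambda>w. SG S D w) ` {w. w < n \<and> is_option S D n w})"
  by auto
termination by (relation "measure (\<lambda>(S,D,n). n)") auto

declare SG.simps[simp del]

fun aseq :: "nat \<Rightarrow> nat \<Rightarrow> nat" where
  "aseq k 0 = k"
| "aseq k (Suc m) = k * (aseq k m + 2)"

fun cseq :: "nat \<Rightarrow> nat \<Rightarrow> nat" where
  "cseq k 0 = 4 * k"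
| "cseq k (Suc m) = k * (cseq k m + 2)"

definition sgs :: "nat \<Rightarrow> nat \<Rightarrow> nat \<Rightarrow> nat list" where
  "sgs k lo hi = map (SG {2} {k}) [lo..<Suc hi]"

end

theory Submission
  imports Defs
begin


definition F :: "nat \<Rightarrow> nat \<Rightarrow> nat" where
  "F r n = (if (n + r) mod 4 < 2 then 1 else 0)"

lemma F_le1: "F r n \<le> 1" by (simp add: F_def)

lemma Fw: "n + r = 4*w + d \<Longrightarrow> F r n = (if d mod 4 < 2 then 1 else 0)"
  by (simp add: F_def)

lemma dm4: "\<exists>w d. (x::nat) = 4*w + d \<and> d < 4"
  by (rule exI[of _ "x div 4"], rule exI[of _ "x mod 4"]) simp

lemma four_cases: "(d::nat) < 4 \<Longrightarrow> d = 0 \<or> d = 1 \<or> d = 2 \<or> d = 3" by arith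

lemma F_flip: assumes "2 \<le> n" shows "F r n = 1 - F r (n-2)"
proof -
  obtain w d where wd: "n - 2 + r = 4*w + d" "d < 4" using dm4 by blast
  have e1: "F r (n-2) = (if d mod 4 < 2 then 1 else 0)" using Fw wd by blast
  have e2: "F r n = (if (d+2) mod 4 < 2 then 1 else 0)" using Fw[of n r w "d+2"] wd assms by simp
  show ?thesis using four_cases[OF wd(2)] e1 e2 by auto
qed

lemma F_shift2: "F (r+2) n = 1 - F r n"
proof -
  obtain w d where wd: "n + r = 4*w + d" "d < 4" using dm4 by blast
  have e1: "F r n = (if d mod 4 < 2 then 1 else 0)" using Fw wd by blast
  have e2: "F (r+2) n = (if (d+2) mod 4 < 2 then 1 else 0)" using Fw[of n "r+2" w "d+2"] wd by simp
  show ?thesis using four_cases[OF wd(2)] e1 e2 by auto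
qed

lemma F_mod: assumes "n mod 4 = j mod 4" shows "F r n = F r j"
proof -
  have "n + r = 4*(n div 4) + (n mod 4 + r)" by simp
  then have e1: "F r n = (if (n mod 4 + r) mod 4 < 2 then 1 else 0)" by (rule Fw)
  have "j + r = 4*(j div 4) + (n mod 4 + r)" using assms by simp
  then have e2: "F r j = (if (n mod 4 + r) mod 4 < 2 then 1 else 0)" by (rule Fw)
  show ?thesis using e1 e2 by simp
qed

lemma F_per4: "F r (n + 4*q) = F r n"
proof -
  have "n + r = 4*((n+r) div 4) + (n+r) mod 4" by simp
  then have e1: "F r n = (if (n+r) mod 4 mod 4 < 2 then 1 else 0)" by (rule Fw)
  have "n + 4*q + r = 4*((n+r) div 4 + q) + (n+r) mod 4" by simp
  then have e2: "F r (n+4*q) = (if (n+r) mod 4 mod 4 < 2 then 1 else 0)" by (rule Fw)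
  show ?thesis using e1 e2 by simp
qed

lemma F_per: "F r (n+4) = F r n"
  using F_per4[of r n 1] by simp

lemma F_res: assumes "(lo + r) mod 4 = s" shows "F r (lo + i) = (if (s + i) mod 4 < 2 then 1 else 0)"
proof -
  have "lo + i + r = 4*((lo+r) div 4) + (s + i)"
    using assms div_mult_mod_eq[of "lo+r" 4] by simp
  then show ?thesis by (rule Fw)
qed

lemma mex_eq: assumes "m \<notin> T" "\<forall>i<m. i \<in> T" shows "mex T = m"
  unfolding mex_def
proof (rule Least_equality)
  show "m \<notin> T" by fact
  fix y assume "y \<notin> T" then show "m \<le> y" using assms(2) by (meson not_le)
qed

lemma mex_single: "mex {x} = (if x = 0 then 1 else 0)"
  by (rule mex_eq) auto

lemma mex_0s: "s \<noteq> 1 \<Longrightarrow> mex {0, s} = 1"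
  by (rule mex_eq) auto

lemma mex_1s: "s \<noteq> 0 \<Longrightarrow> mex {1, s} = 0"
  by (rule mex_eq) auto

lemma mex_10: "mex {1, 0} = 2"
  by (rule mex_eq) auto

lemma upt4: "[lo..<lo+4] = [lo, lo+1, lo+2, lo+3]"
  by (simp add: upt_rec add.commute[of 1] add.commute[of 2] add.commute[of 3] eval_nat_numeral)

lemma upt2: "[x..<x+2] = [x, x+1]"
  by (simp add: upt_rec add.commute[of 1] eval_nat_numeral)

lemma map_F_period: "map (F r) [lo..<lo+4*q] = concat (replicate q (map (F r) [lo..<lo+4]))"
proof (induction q arbitrary: lo)
  case 0 then show ?case by simp
next
  case (Suc q)
  have "[lo..<lo+4*Suc q] = [lo..<lo+4] @ [lo+4..<(lo+4)+4*q]"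
    using upt_add_eq_append[of lo "lo+4" "4*q"] by (simp add: algebra_simps)
  moreover have "map (F r) [lo+4..<(lo+4)+4] = map (F r) [lo..<lo+4]"
    unfolding upt4 using F_per[of r lo] F_per[of r "lo+1"] F_per[of r "lo+2"] F_per[of r "lo+3"]
    by (simp add: algebra_simps)
  ultimately show ?case using Suc[of "lo+4"] by simp
qed

lemma map4: "map f [lo..<lo+4] = [f lo, f (lo+1), f (lo+2), f (lo+3)]"
  by (simp add: upt4)

lemma pat1: assumes "(lo + r) mod 4 = 1"
  shows "map (F r) [lo..<lo+4*q] = concat (replicate q [1,0,0,1])"
proof -
  have "map (F r) [lo..<lo+4] = [1,0,0,1]"
    using F_res[OF assms, of 0] F_res[OF assms, of 1] F_res[OF assms, of 2] F_res[OF assms, of 3]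
    by (simp add: map4)
  then show ?thesis by (simp add: map_F_period)
qed

lemma pat2: assumes "(lo + r) mod 4 = 2"
  shows "map (F r) [lo..<lo+4*q] = concat (replicate q [0,0,1,1])"
proof -
  have "map (F r) [lo..<lo+4] = [0,0,1,1]"
    using F_res[OF assms, of 0] F_res[OF assms, of 1] F_res[OF assms, of 2] F_res[OF assms, of 3]
    by (simp add: map4)
  then show ?thesis by (simp add: map_F_period)
qed




locale mk =
  fixes k :: nat
  assumes k1: "k > 1" and k4: "k mod 4 = 1"
begin

abbreviation g where "g \<equiv> SG {2} {k}"

lemma kD: "\<exists>D. k = 4*D + 1"
proof -
  have "k div 4 * 4 + k mod 4 = k" by (rule div_mult_mod_eq)
  then have "k = 4*(k div 4) + 1" using k4 by linarith
  then show ?thesis by blast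
qed

lemma k5: "k \<ge> 5"
proof -
  obtain D where D: "k = 4*D + 1" using kD by blast
  then show ?thesis using k1 by (cases D) auto
qed

lemma opts: "{w. w < n \<and> is_option {2} {k} n w} =
   (if 2 \<le> n then {n-2} else {}) \<union> (if 0 < n \<and> k dvd n then {n div k} else {})"
  using k1 by (auto simp: is_option_def split: if_splits)

lemma g0: "g 0 = 0"
  by (subst SG.simps) (simp add: opts mex_def)

lemma g1: "g 1 = 0"
proof -
  have "\<not> k dvd 1" using k1 by auto
  then have e: "{w. w < 1 \<and> is_option {2} {k} 1 w} = {}" unfolding opts[of 1] by simp
  have "g 1 = mex (g ` {w. w < 1 \<and> is_option {2} {k} 1 w})" by (rule SG.simps)
  also have "... = mex {}" unfolding e by simp
  also have "... = 0" unfolding mex_def by simp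
  finally show ?thesis .
qed

lemma g_nd: "2 \<le> n \<Longrightarrow> \<not> k dvd n \<Longrightarrow> g n = (if g (n-2) = 0 then 1 else 0)"
  by (subst SG.simps) (simp add: opts mex_single)

lemma g_d: "2 \<le> n \<Longrightarrow> k dvd n \<Longrightarrow> g n = mex {g (n-2), g (n div k)}"
  by (subst SG.simps) (simp add: opts image_Un insert_commute)

lemma dvd_mod4: "k dvd n \<Longrightarrow> n mod 4 = (n div k) mod 4"
proof -
  assume "k dvd n"
  then obtain j where n: "n = k * j" by auto
  have "(k * j) mod 4 = ((k mod 4) * (j mod 4)) mod 4" by (simp add: mod_mult_eq)
  then show ?thesis using n k1 k4 by simp
qed

lemma run:
  assumes h0: "g lo = F r lo" and h1: "g (lo+1) = F r (lo+1)"
    and hm: "\<And>n. lo+2 \<le> n \<Longrightarrow> n \<le> hi \<Longrightarrow> k dvd n \<Longrightarrow> g (n div k) \<noteq> F r n"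
  shows "lo \<le> n \<Longrightarrow> n \<le> hi \<Longrightarrow> g n = F r n"
proof (induction n rule: less_induct)
  case (less n)
  consider "n = lo" | "n = lo+1" | "lo+2 \<le> n" using less.prems by linarith
  then show ?case
  proof cases
    case 1 then show ?thesis using h0 by simp
  next
    case 2 then show ?thesis using h1 by simp
  next
    case 3
    have IH: "g (n-2) = F r (n-2)" using less 3 by auto
    have Fn: "F r n = 1 - F r (n-2)" using F_flip 3 by simp
    have b: "F r (n-2) \<le> 1" by (rule F_le1)
    show ?thesis
    proof (cases "k dvd n")
      case True
      have s: "g (n div k) \<noteq> F r n" using hm 3 less.prems True by auto
      have e: "g n = mex {g (n-2), g (n div k)}" using g_d 3 True by simp
      show ?thesis
      proof (cases "F r (n-2) = 0")
        case True
        then show ?thesis using e IH Fn s mex_0s by simp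
      next
        case False
        then have "F r (n-2) = 1" using b by simp
        then show ?thesis using e IH Fn s mex_1s by simp
      qed
    next
      case False
      then show ?thesis using g_nd 3 IH Fn b by auto
    qed
  qed
qed

lemma kmul_mod: "(k * x) mod 4 = x mod 4"
proof -
  have "(k * x) mod 4 = ((k mod 4) * (x mod 4)) mod 4" by (simp add: mod_mult_eq)
  then show ?thesis using k4 by simp
qed

lemma a_w: "\<exists>w. aseq k m + 2*m = 4*w + 1"
proof (induction m)
  case 0
  obtain D where D: "k = 4*D + 1" using kD by blast
  then show ?case by auto
next
  case (Suc m)
  obtain D where D: "k = 4*D + 1" using kD by blast
  obtain w where w: "aseq k m + 2*m = 4*w + 1" using Suc by blast
  have "(4*D+1)*(aseq k m + 2) = 4*(D*(aseq k m + 2)) + aseq k m + 2" by (simp add: algebra_simps)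
  then have "aseq k (Suc m) + 2*Suc m = 4*(D*(aseq k m + 2) + w + 1) + 1" using D w by simp
  then show ?case by blast
qed

lemma c_w: "\<exists>w. cseq k m + 2*m = 4*w"
proof (induction m)
  case 0
  then show ?case by auto
next
  case (Suc m)
  obtain D where D: "k = 4*D + 1" using kD by blast
  obtain w where w: "cseq k m + 2*m = 4*w" using Suc by blast
  have "(4*D+1)*(cseq k m + 2) = 4*(D*(cseq k m + 2)) + cseq k m + 2" by (simp add: algebra_simps)
  then have "cseq k (Suc m) + 2*Suc m = 4*(D*(cseq k m + 2) + w + 1)" using D w by simp
  then show ?case by blast
qed

lemma ac_le: "aseq k m + 3 \<le> cseq k m \<and> cseq k m + 3 \<le> aseq k (Suc m)"
proof (induction m)
  case 0
  have a: "5*k \<le> k*k" using k5 by (simp add: mult_le_mono1)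
  have b: "k*(k+2) = k*k + 2*k" by (simp add: algebra_simps)
  have "4*k + 3 \<le> k * (k+2)" using a b k5 by linarith
  then show ?case using k5 by simp
next
  case (Suc m)
  have "k * (aseq k m + 5) \<le> k * (cseq k m + 2)" using Suc by (intro mult_le_mono2) linarith
  then have 1: "k * (aseq k m + 2) + 3 \<le> k * (cseq k m + 2)" using k5 by (simp add: algebra_simps)
  have "k * (cseq k m + 5) \<le> k * (aseq k (Suc m) + 2)" using Suc by (intro mult_le_mono2) linarith
  then have 2: "k * (cseq k m + 2) + 3 \<le> k * (aseq k (Suc m) + 2)" using k5 by (simp add: algebra_simps)
  show ?case using 1 2 by simp
qed

lemma a_ge: "aseq k m \<ge> k"
  by (cases m) (use k1 in auto)

lemma a_big: "aseq k (Suc m) \<ge> 3*k"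
proof -
  have "aseq k m + 2 \<ge> 3" using a_ge[of m] k1 by linarith
  then have "k * 3 \<le> k * (aseq k m + 2)" by (rule mult_le_mono2)
  then show ?thesis by simp
qed

lemma k_dvd_c: "k dvd cseq k m" by (cases m) auto

end



lemma FwI: "n + r = 4*w + d \<Longrightarrow> d mod 4 < 2 \<Longrightarrow> F r n = 1"
  using Fw by simp
lemma FwO: "n + r = 4*w + d \<Longrightarrow> \<not> d mod 4 < 2 \<Longrightarrow> F r n = 0"
  using Fw by simp

context mk begin

lemma no_mult: "k*j < n \<Longrightarrow> n < k*(j+1) \<Longrightarrow> \<not> k dvd n"
proof
  assume a: "k*j < n" "n < k*(j+1)" "k dvd n"
  then obtain i where n: "n = k*i" by auto
  have "j < i" using a(1) n by (metis mult_less_cancel1)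
  moreover have "i < j+1" using a(2) n by (metis mult_less_cancel1)
  ultimately show False by simp
qed

lemma div_gt: "k dvd n \<Longrightarrow> k*x < n \<Longrightarrow> x < n div k"
  by (metis dvd_mult_div_cancel mult_less_cancel1)

lemma div_lt: "k dvd n \<Longrightarrow> n < k*y \<Longrightarrow> n div k < y"
  by (metis dvd_mult_div_cancel mult_less_cancel1)

lemma ndvd_add: "k dvd c \<Longrightarrow> 0 < i \<Longrightarrow> i < k \<Longrightarrow> \<not> k dvd (c + i)"
  by (metis dvd_add_right_iff nat_dvd_not_less)

lemma X: "n < k \<Longrightarrow> g n = F 2 n"
proof -
  assume n: "n < k"
  show ?thesis
  proof (rule run[of 0 2 "k-1"])
    show "g 0 = F 2 0" using g0 by (simp add: F_def)
    show "g (0+1) = F 2 (0+1)" using g1 by (simp add: F_def)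
    fix m assume m: "0+2 \<le> m" "m \<le> k-1" "k dvd m"
    then have "k \<le> m" using dvd_imp_le[of k m] by simp
    then show "g (m div k) \<noteq> F 2 m" using m k1 by linarith
  qed (use n in auto)
qed

lemma gk: "g k = 2"
proof -
  obtain D where D: "k = 4*D + 1" using kD by blast
  have "g k = mex {g (k-2), g (k div k)}" using g_d k1 by simp
  moreover have "g (k-2) = 1" using X[of "k-2"] FwI[of "k-2" 2 D 1] D k5 by simp
  moreover have "g (k div k) = 0" using k1 g1 by simp
  ultimately show ?thesis using mex_10 by simp
qed

lemma Y: "k < n \<Longrightarrow> n < 2*k \<Longrightarrow> g n = F 3 n"
proof -
  assume n: "k < n" "n < 2*k"
  obtain D where D: "k = 4*D + 1" using kD by blast
  show ?thesis
  proof (rule run[of "k+1" 3 "2*k-1"])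
    have nd: "\<not> k dvd (k+1)" using ndvd_add[of k 1] k1 by simp
    have "g (k-1) = 0" using X[of "k-1"] FwO[of "k-1" 2 D 2] D k5 by simp
    moreover have "F 3 (k+1) = 1" using FwI[of "k+1" 3 "D+1" 1] D by simp
    ultimately show "g (k+1) = F 3 (k+1)" using g_nd[of "k+1"] nd k1 by simp
    have nd2: "\<not> k dvd (k+2)" using ndvd_add[of k 2] k5 by simp
    moreover have "F 3 (k+2) = 0" using FwO[of "k+2" 3 "D+1" 2] D by simp
    ultimately show "g (k+1+1) = F 3 (k+1+1)" using g_nd[of "k+2"] gk by simp
    fix m assume "k+1+2 \<le> m" "m \<le> 2*k-1" "k dvd m"
    then show "g (m div k) \<noteq> F 3 m" using no_mult[of 1 m] by simp
  qed (use n in auto)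
qed

lemma g2k: "g (2*k) = 2"
proof -
  obtain D where D: "k = 4*D + 1" using kD by blast
  have "g (2*k) = mex {g (2*k-2), g (2*k div k)}" using g_d k1 by simp
  moreover have "g (2*k-2) = 0" using Y[of "2*k-2"] FwO[of "2*k-2" 3 "2*D" 3] D k5 by simp
  moreover have "g (2*k div k) = 1" using k5 X[of 2] FwI[of 2 2 1 0] by simp
  ultimately show ?thesis using mex_10 by (simp add: insert_commute)
qed

lemma Z: "2*k < n \<Longrightarrow> n < 4*k \<Longrightarrow> g n = F 3 n"
proof -
  assume n: "2*k < n" "n < 4*k"
  obtain D where D: "k = 4*D + 1" using kD by blast
  show ?thesis
  proof (rule run[of "2*k+1" 3 "4*k-1"])
    have nd: "\<not> k dvd (2*k+1)" using ndvd_add[of "2*k" 1] k1 by simp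
    have "g (2*k-1) = 1" using Y[of "2*k-1"] FwI[of "2*k-1" 3 "2*D+1" 0] D k5 by simp
    moreover have "F 3 (2*k+1) = 0" using FwO[of "2*k+1" 3 "2*D+1" 2] D by simp
    ultimately show "g (2*k+1) = F 3 (2*k+1)" using g_nd[of "2*k+1"] nd k1 by simp
    have nd2: "\<not> k dvd (2*k+2)" using ndvd_add[of "2*k" 2] k5 by simp
    moreover have "F 3 (2*k+2) = 0" using FwO[of "2*k+2" 3 "2*D+1" 3] D by simp
    ultimately show "g (2*k+1+1) = F 3 (2*k+1+1)" using g_nd[of "2*k+2"] g2k by simp
    fix m assume m: "2*k+1+2 \<le> m" "m \<le> 4*k-1" "k dvd m"
    define j where "j = m div k"
    have "2 < j" unfolding j_def using div_gt[of m 2] m by (simp add: mult.commute)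
    moreover have "j < 4" unfolding j_def using div_lt[of m 4] m k1 by (simp add: mult.commute)
    ultimately have j3: "j = 3" by simp
    have "m mod 4 = 3 mod 4" using dvd_mod4[OF m(3)] j3 j_def by simp
    then have "F 3 m = F 3 3" by (rule F_mod)
    also have "F 3 3 = 0" using FwO[of 3 3 1 2] by simp
    finally have "F 3 m = 0" .
    moreover have "g j = 1" using j3 X[of 3] k5 FwI[of 3 2 1 1] by simp
    ultimately show "g (m div k) \<noteq> F 3 m" using j_def by simp
  qed (use n in auto)
qed

lemma g4k: "g (4*k) = 2"
proof -
  have "g (4*k) = mex {g (4*k-2), g (4*k div k)}" using g_d k1 by simp
  moreover have "g (4*k-2) = 1" using Z[of "4*k-2"] FwI[of "4*k-2" 3 k 1] k5 by simp
  moreover have "g (4*k div k) = 0" using k5 X[of 4] FwO[of 4 2 1 2] by simp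
  ultimately show ?thesis using mex_10 by simp
qed

end



lemma F_shift2': "r' = r + 2 \<Longrightarrow> F r' n = 1 - F r n"
  using F_shift2 by simp

context mk begin

definition lowA :: "nat \<Rightarrow> nat" where
  "lowA m = (if m = 0 then 0 else cseq k (m-1) + 1)"

definition Inv :: "nat \<Rightarrow> bool" where
  "Inv m \<longleftrightarrow> (\<forall>n. lowA m \<le> n \<and> n < aseq k m \<longrightarrow> g n = F (2*m+2) n) \<and> g (aseq k m) = 2
     \<and> (\<forall>n. aseq k m < n \<and> n < cseq k m \<and> n \<noteq> 2*k \<longrightarrow> g n = F (2*m+3) n) \<and> g (cseq k m) = 2"

lemma Inv0: "Inv 0"
proof -
  have "\<And>n. k < n \<Longrightarrow> n < 4*k \<Longrightarrow> n \<noteq> 2*k \<Longrightarrow> g n = F 3 n"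
  proof -
    fix n assume n: "k < n" "n < 4*k" "n \<noteq> 2*k"
    show "g n = F 3 n"
    proof (cases "n < 2*k")
      case True then show ?thesis using Y n by simp
    next
      case False then show ?thesis using Z n by simp
    qed
  qed
  then show ?thesis unfolding Inv_def lowA_def mult_0_right add_0 using X gk g4k by simp
qed

lemma a1_ne: "aseq k m + 1 \<noteq> 2*k \<and> aseq k m + 2 \<noteq> 2*k"
proof (cases m)
  case 0 then show ?thesis using k5 by simp
next
  case (Suc m')
  from a_big[of m'] have "aseq k m \<ge> 3*k" by (simp only: Suc)
  then show ?thesis using k5 by linarith
qed

lemma step: assumes I: "Inv m" shows "Inv (Suc m)"
proof -
  define a c a' c' where defs: "a = aseq k m" "c = cseq k m" "a' = aseq k (Suc m)" "c' = cseq k (Suc m)"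
  have a'eq: "a' = k*(a+2)" and c'eq: "c' = k*(c+2)" using defs by auto
  obtain \<alpha> where aw: "a + 2*m = 4*\<alpha> + 1" using a_w defs by blast
  obtain \<gamma> where cw: "c + 2*m = 4*\<gamma>" using c_w defs by blast
  obtain \<alpha>' where a'w0: "a' + 2*Suc m = 4*\<alpha>' + 1" using a_w defs by blast
  obtain \<gamma>' where c'w0: "c' + 2*Suc m = 4*\<gamma>'" using c_w defs by blast
  have a'w: "a' + 2*m + 2 = 4*\<alpha>' + 1" using a'w0 by simp
  have c'w: "c' + 2*m + 2 = 4*\<gamma>'" using c'w0 by simp
  have le1: "a+3 \<le> c" "c+3 \<le> a'" "a'+3 \<le> c'" using ac_le[of m] ac_le[of "Suc m"] defs by auto
  have a2k: "2*k < a'" using a_big[of m] defs k1 by simp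
  have IA: "\<And>n. lowA m \<le> n \<Longrightarrow> n < a \<Longrightarrow> g n = F (2*m+2) n" using I defs unfolding Inv_def by blast
  have ga: "g a = 2" using I defs unfolding Inv_def by blast
  have IC: "\<And>n. a < n \<Longrightarrow> n < c \<Longrightarrow> n \<noteq> 2*k \<Longrightarrow> g n = F (2*m+3) n" using I defs unfolding Inv_def by blast
  have gc: "g c = 2" using I defs unfolding Inv_def by blast
  have dc: "k dvd c" using k_dvd_c defs by simp
  have da': "k dvd a'" using a'eq by simp
  have dc': "k dvd c'" using c'eq by simp
  have lowc: "k * lowA m \<le> c"
  proof (cases m)
    case 0 then show ?thesis by (simp add: lowA_def)
  next
    case (Suc m') then show ?thesis using defs by (simp add: lowA_def)
  qed
  have ne: "a+1 \<noteq> 2*k" "a+2 \<noteq> 2*k" using a1_ne defs by auto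
  have Fc1: "F (2*m+4) (c+1) = 1"
  proof -
    have "c + 1 + (2*m+4) = 4*\<gamma> + 5" using cw by linarith
    then show ?thesis by (rule FwI) simp
  qed
  have Fc2: "F (2*m+4) (c+2) = 0"
  proof -
    have "c + 2 + (2*m+4) = 4*\<gamma> + 6" using cw by linarith
    then show ?thesis by (rule FwO) simp
  qed
  have A: "\<And>n. c+1 \<le> n \<Longrightarrow> n \<le> a'-1 \<Longrightarrow> g n = F (2*m+4) n"
  proof (rule run)
    have nd: "\<not> k dvd (c+1)" using ndvd_add[OF dc, of 1] k1 by simp
    have c1: "c - 1 \<noteq> 2*k"
    proof
      assume "c - 1 = 2*k"
      then have "2*k + 2*m + 1 = 4*\<gamma>" using cw le1 by linarith
      then show False by presburger
    qed
    have "g (c-1) = F (2*m+3) (c-1)" using IC[of "c-1"] le1 c1 by simp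
    moreover have "F (2*m+3) (c-1) = 0"
    proof -
      have "c - 1 + (2*m+3) = 4*\<gamma> + 2" using cw le1 by linarith
      then show ?thesis by (rule FwO) simp
    qed
    ultimately show "g (c+1) = F (2*m+4) (c+1)" using g_nd[of "c+1"] nd Fc1 le1 by simp
    have nd2: "\<not> k dvd (c+2)" using ndvd_add[OF dc, of 2] k5 by simp
    then show "g (c+1+1) = F (2*m+4) (c+1+1)" using g_nd[of "c+2"] gc Fc2 by simp
    fix n assume n: "c+1+2 \<le> n" "n \<le> a'-1" "k dvd n"
    define j where "j = n div k"
    have nj: "F (2*m+4) n = F (2*m+4) j" using F_mod dvd_mod4[OF n(3)] j_def by blast
    have j1: "lowA m < j" unfolding j_def using div_gt[OF n(3)] lowc n by simp
    have j2: "j < a+2" unfolding j_def using div_lt[OF n(3)] n a'eq le1 by simp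
    have "g j \<noteq> F (2*m+4) j"
    proof -
      consider "j < a" | "j = a" | "j = a+1" using j2 by linarith
      then show ?thesis
      proof cases
        case 1
        then have "g j = F (2*m+2) j" using IA j1 by simp
        moreover have "F (2*m+4) j = 1 - F (2*m+2) j" by (rule F_shift2') simp
        moreover have "F (2*m+2) j \<le> 1" by (rule F_le1)
        ultimately show ?thesis by arith
      next
        case 2 then show ?thesis using ga F_le1[of "2*m+4" j] by simp
      next
        case 3
        have "g j = F (2*m+3) (a+1)" using IC[of "a+1"] 3 le1 ne by simp
        moreover have "F (2*m+3) (a+1) = 1"
        proof -
          have "a + 1 + (2*m+3) = 4*\<alpha> + 5" using aw by linarith
          then show ?thesis by (rule FwI) simp
        qed
        moreover have "F (2*m+4) (a+1) = 0"
        proof -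
          have "a + 1 + (2*m+4) = 4*\<alpha> + 6" using aw by linarith
          then show ?thesis by (rule FwO) simp
        qed
        ultimately show ?thesis using 3 by simp
      qed
    qed
    then show "g (n div k) \<noteq> F (2*m+4) n" using nj j_def by simp
  qed
  have ga': "g a' = 2"
  proof -
    have "g a' = mex {g (a'-2), g (a' div k)}" using g_d[OF _ da'] le1 by simp
    moreover have "a' div k = a+2" using a'eq k1 by simp
    moreover have "g (a'-2) = 1"
    proof -
      have "a' - 2 + (2*m+4) = 4*\<alpha>' + 1" using a'w le1 by linarith
      then have "F (2*m+4) (a'-2) = 1" by (rule FwI) simp
      then show ?thesis using A[of "a'-2"] le1 by simp
    qed
    moreover have "g (a+2) = 0"
    proof -
      have "a + 2 + (2*m+3) = 4*\<alpha> + 6" using aw by linarith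
      then have "F (2*m+3) (a+2) = 0" by (rule FwO) simp
      then show ?thesis using IC[of "a+2"] le1 ne by simp
    qed
    ultimately show ?thesis using mex_10 by simp
  qed
  have C: "\<And>n. a'+1 \<le> n \<Longrightarrow> n \<le> c'-1 \<Longrightarrow> g n = F (2*m+5) n"
  proof (rule run)
    have nd: "\<not> k dvd (a'+1)" using ndvd_add[OF da', of 1] k1 by simp
    have "g (a'-1) = 0"
    proof -
      have "a' - 1 + (2*m+4) = 4*\<alpha>' + 2" using a'w le1 by linarith
      then have "F (2*m+4) (a'-1) = 0" by (rule FwO) simp
      then show ?thesis using A[of "a'-1"] le1 by simp
    qed
    moreover have "F (2*m+5) (a'+1) = 1"
    proof -
      have "a' + 1 + (2*m+5) = 4*\<alpha>' + 5" using a'w by linarith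
      then show ?thesis by (rule FwI) simp
    qed
    ultimately show "g (a'+1) = F (2*m+5) (a'+1)" using g_nd[of "a'+1"] nd le1 by simp
    have nd2: "\<not> k dvd (a'+2)" using ndvd_add[OF da', of 2] k5 by simp
    moreover have "F (2*m+5) (a'+2) = 0"
    proof -
      have "a' + 2 + (2*m+5) = 4*\<alpha>' + 6" using a'w by linarith
      then show ?thesis by (rule FwO) simp
    qed
    ultimately show "g (a'+1+1) = F (2*m+5) (a'+1+1)" using g_nd[of "a'+2"] ga' by simp
    fix n assume n: "a'+1+2 \<le> n" "n \<le> c'-1" "k dvd n"
    define j where "j = n div k"
    have nj: "F (2*m+5) n = F (2*m+5) j" using F_mod dvd_mod4[OF n(3)] j_def by blast
    have j1: "a+2 < j" unfolding j_def using div_gt[OF n(3)] a'eq n by simp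
    have j2: "j < c+2" unfolding j_def using div_lt[OF n(3)] n c'eq le1 by simp
    have "g j \<noteq> F (2*m+5) j"
    proof -
      consider "j < c \<and> j \<noteq> 2*k" | "j = 2*k" | "j = c" | "j = c+1" using j2 by linarith
      then show ?thesis
      proof cases
        case 1
        then have "g j = F (2*m+3) j" using IC j1 by simp
        moreover have "F (2*m+5) j = 1 - F (2*m+3) j" by (rule F_shift2') simp
        moreover have "F (2*m+3) j \<le> 1" by (rule F_le1)
        ultimately show ?thesis by arith
      next
        case 2 then show ?thesis using g2k F_le1[of "2*m+5" j] by simp
      next
        case 3 then show ?thesis using gc F_le1[of "2*m+5" j] by simp
      next
        case 4
        have "g j = F (2*m+4) (c+1)" using A[of "c+1"] 4 le1 by simp
        moreover have "F (2*m+5) (c+1) = 0"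
        proof -
          have "c + 1 + (2*m+5) = 4*\<gamma> + 6" using cw by linarith
          then show ?thesis by (rule FwO) simp
        qed
        ultimately show ?thesis using 4 Fc1 by simp
      qed
    qed
    then show "g (n div k) \<noteq> F (2*m+5) n" using nj j_def by simp
  qed
  have gc': "g c' = 2"
  proof -
    have "g c' = mex {g (c'-2), g (c' div k)}" using g_d[OF _ dc'] le1 by simp
    moreover have "c' div k = c+2" using c'eq k1 by simp
    moreover have "g (c'-2) = 1"
    proof -
      have "c' - 2 + (2*m+5) = 4*\<gamma>' + 1" using c'w le1 by linarith
      then have "F (2*m+5) (c'-2) = 1" by (rule FwI) simp
      then show ?thesis using C[of "c'-2"] le1 by simp
    qed
    moreover have "g (c+2) = 0" using A[of "c+2"] le1 Fc2 by simp
    ultimately show ?thesis using mex_10 by simp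
  qed
  have l: "lowA (Suc m) = c+1" using defs by (simp add: lowA_def)
  have e1: "2 * Suc m + 2 = 2*m+4" "2 * Suc m + 3 = 2*m+5" by simp_all
  have A': "\<forall>n. c+1 \<le> n \<and> n < a' \<longrightarrow> g n = F (2*m+4) n" using A by auto
  have C': "\<forall>n. a' < n \<and> n < c' \<and> n \<noteq> 2*k \<longrightarrow> g n = F (2*m+5) n" using C by auto
  show ?thesis unfolding Inv_def l e1
    using A' C' ga' gc' defs by simp
qed

lemma Inv_all: "Inv m"
  by (induction m) (use Inv0 step in auto)

end



lemma mod_w: "x = 4*w + d \<Longrightarrow> (x::nat) mod 4 = d mod 4" by simp

context mk begin

lemma lp1: assumes h: "\<And>n. lo \<le> n \<Longrightarrow> n < lo+4*q+2 \<Longrightarrow> g n = F r n" and r: "(lo+r) mod 4 = 1"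
  shows "map g [lo..<lo+4*q+2] = concat (replicate q [1,0,0,1]) @ [1,0]"
proof -
  have "map g [lo..<lo+4*q+2] = map (F r) [lo..<lo+4*q+2]" using h by (intro map_cong) auto
  also have "... = map (F r) [lo..<lo+4*q] @ map (F r) [lo+4*q..<lo+4*q+2]"
    using upt_add_eq_append[of lo "lo+4*q" 2] by simp
  also have "map (F r) [lo+4*q..<lo+4*q+2] = [1,0]"
  proof -
    have "F r (lo+4*q) = F r lo" by (rule F_per4)
    moreover have "F r (lo+1+4*q) = F r (lo+1)" by (rule F_per4)
    moreover have "F r (lo+0) = 1" using F_res[OF r, of 0] by simp
    moreover have "F r (lo+1) = 0" using F_res[OF r, of 1] by simp
    ultimately show ?thesis by (simp add: upt2 algebra_simps)
  qed
  finally show ?thesis using pat1[OF r] by simp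
qed

lemma lp0: assumes h: "\<And>n. lo \<le> n \<Longrightarrow> n < lo+4*q \<Longrightarrow> g n = F r n" and r: "(lo+r) mod 4 = 1"
  shows "map g [lo..<lo+4*q] = concat (replicate q [1,0,0,1])"
proof -
  have "map g [lo..<lo+4*q] = map (F r) [lo..<lo+4*q]" using h by (intro map_cong) auto
  then show ?thesis using pat1[OF r] by simp
qed

lemma lp2: assumes h: "\<And>n. lo \<le> n \<Longrightarrow> n < lo+4*q+1 \<Longrightarrow> g n = F r n" and r: "(lo+r) mod 4 = 2"
  shows "map g [lo..<lo+4*q+1] = concat (replicate q [0,0,1,1]) @ [0]"
proof -
  have "map g [lo..<lo+4*q+1] = map (F r) [lo..<lo+4*q+1]" using h by (intro map_cong) auto
  also have "... = map (F r) [lo..<lo+4*q] @ [F r (lo+4*q)]" by simp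
  also have "F r (lo+4*q) = 0"
  proof -
    have "F r (lo+4*q) = F r lo" by (rule F_per4)
    moreover have "F r (lo+0) = 0" using F_res[OF r, of 0] by simp
    ultimately show ?thesis by simp
  qed
  finally show ?thesis using pat2[OF r] by simp
qed

thm_deps lp1 lp0 lp2

end

theorem mainTheorem3:
  fixes k :: nat
  assumes "k > 1" and "k mod 4 = 1"
  shows "SG {2} {k} (2 * k) = 2
    \<and> (\<forall>m. SG {2} {k} (aseq k m) = 2 \<and> SG {2} {k} (cseq k m) = 2)
    \<and> sgs k 0 (aseq k 0 - 1) = concat (replicate ((aseq k 0 - 1) div 4) [0,0,1,1]) @ [0]
    \<and> sgs k (aseq k 0 + 1) (2 * k - 1) = concat (replicate ((2 * k - aseq k 0 - 1) div 4) [1,0,0,1])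
    \<and> sgs k (2 * k + 1) (cseq k 0 - 1) = concat (replicate ((cseq k 0 - 2 * k - 2) div 4) [0,0,1,1]) @ [0]
    \<and> (\<forall>m\<ge>1. sgs k (cseq k (m - 1) + 1) (aseq k m - 1)
          = concat (replicate ((aseq k m - cseq k (m - 1) - 3) div 4) [1,0,0,1]) @ [1,0])
    \<and> (\<forall>m\<ge>1. sgs k (aseq k m + 1) (cseq k m - 1)
          = concat (replicate ((cseq k m - aseq k m - 3) div 4) [1,0,0,1]) @ [1,0])"
proof -
  interpret mk k using assms by unfold_locales
  obtain D where D: "k = 4*D + 1" using kD by blast
  have P1: "SG {2} {k} (2 * k) = 2" by (rule g2k)
  have P2: "\<forall>m. SG {2} {k} (aseq k m) = 2 \<and> SG {2} {k} (cseq k m) = 2"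
    using Inv_all unfolding Inv_def by blast
  have P3: "sgs k 0 (aseq k 0 - 1) = concat (replicate ((aseq k 0 - 1) div 4) [0,0,1,1]) @ [0]"
  proof -
    have q: "(aseq k 0 - 1) div 4 = D" using D by simp
    have e: "Suc (aseq k 0 - 1) = 0 + 4*D + 1" using D by simp
    have "map g [0..<0+4*D+1] = concat (replicate D [0,0,1,1]) @ [0]"
      by (rule lp2[where r=2]) (use X D in auto)
    then show ?thesis unfolding sgs_def e q .
  qed
  have P4: "sgs k (aseq k 0 + 1) (2 * k - 1) = concat (replicate ((2 * k - aseq k 0 - 1) div 4) [1,0,0,1])"
  proof -
    have q: "(2 * k - aseq k 0 - 1) div 4 = D" using D by simp
    have e: "Suc (2*k-1) = (aseq k 0+1) + 4*D" using D by simp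
    have r: "(aseq k 0 + 1 + 3) mod 4 = 1" using mod_w[of "aseq k 0 + 1 + 3" D 5] D by simp
    have "map g [aseq k 0+1..<(aseq k 0+1)+4*D] = concat (replicate D [1,0,0,1])"
      by (rule lp0[OF _ r]) (use Y D in auto)
    then show ?thesis unfolding sgs_def e q .
  qed
  have P5: "sgs k (2 * k + 1) (cseq k 0 - 1) = concat (replicate ((cseq k 0 - 2 * k - 2) div 4) [0,0,1,1]) @ [0]"
  proof -
    have q: "(cseq k 0 - 2 * k - 2) div 4 = 2*D" using D by simp
    have e: "Suc (cseq k 0 - 1) = (2*k+1) + 4*(2*D) + 1" using D by simp
    have r: "(2*k + 1 + 3) mod 4 = 2" using mod_w[of "2*k + 1 + 3" "2*D" 6] D by simp
    have "map g [2*k+1..<(2*k+1)+4*(2*D)+1] = concat (replicate (2*D) [0,0,1,1]) @ [0]"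
      by (rule lp2[OF _ r]) (use Z D in auto)
    then show ?thesis unfolding sgs_def e q .
  qed
  have P6: "\<forall>m\<ge>1. sgs k (cseq k (m - 1) + 1) (aseq k m - 1)
          = concat (replicate ((aseq k m - cseq k (m - 1) - 3) div 4) [1,0,0,1]) @ [1,0]"
  proof (intro allI impI)
    fix m :: nat assume m: "m \<ge> 1"
    define c a where cad: "c = cseq k (m-1)" "a = aseq k m"
    have le: "c + 3 \<le> a" using ac_le[of "m-1"] m cad(1) cad(2) by simp
    obtain \<alpha> where aw: "a + 2*m = 4*\<alpha> + 1" using a_w cad(2) by blast
    obtain \<gamma> where cw0: "c + 2*(m-1) = 4*\<gamma>" using c_w cad(1) by blast
    have cw: "c + 2*m = 4*\<gamma> + 2" using cw0 m by simp
    define q where "q = \<alpha> - \<gamma> - 1"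
    have aq: "a = c + 1 + 4*q + 2" using aw cw le q_def by linarith
    have qq: "(a - c - 3) div 4 = q" using aq by simp
    have e: "Suc (a-1) = (c+1) + 4*q + 2" using aq by simp
    have r: "(c + 1 + (2*m+2)) mod 4 = 1" using mod_w[of "c + 1 + (2*m+2)" \<gamma> 5] cw by simp
    have I: "\<And>n. c+1 \<le> n \<Longrightarrow> n < a \<Longrightarrow> g n = F (2*m+2) n"
      using Inv_all[of m] m unfolding Inv_def lowA_def cad(1) cad(2) by auto
    have "map g [c+1..<(c+1)+4*q+2] = concat (replicate q [1,0,0,1]) @ [1,0]"
      by (rule lp1[OF _ r]) (use I aq in auto)
    then show "sgs k (cseq k (m - 1) + 1) (aseq k m - 1)
          = concat (replicate ((aseq k m - cseq k (m - 1) - 3) div 4) [1,0,0,1]) @ [1,0]"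
      unfolding sgs_def cad(1)[symmetric] cad(2)[symmetric] e qq .
  qed
  have P7: "\<forall>m\<ge>1. sgs k (aseq k m + 1) (cseq k m - 1)
          = concat (replicate ((cseq k m - aseq k m - 3) div 4) [1,0,0,1]) @ [1,0]"
  proof (intro allI impI)
    fix m :: nat assume m: "m \<ge> 1"
    define c a where cad: "c = cseq k m" "a = aseq k m"
    have le: "a + 3 \<le> c" using ac_le[of m] cad(1) cad(2) by simp
    obtain \<alpha> where aw: "a + 2*m = 4*\<alpha> + 1" using a_w cad(2) by blast
    obtain \<gamma> where cw: "c + 2*m = 4*\<gamma>" using c_w cad(1) by blast
    have big: "2*k < a"
    proof -
      have "aseq k (Suc (m-1)) \<ge> 3*k" by (rule a_big)
      then show ?thesis using m cad(2) k1 by simp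
    qed
    define q where "q = \<gamma> - \<alpha> - 1"
    have cq: "c = a + 1 + 4*q + 2" using aw cw le q_def by linarith
    have qq: "(c - a - 3) div 4 = q" using cq by simp
    have e: "Suc (c-1) = (a+1) + 4*q + 2" using cq by simp
    have r: "(a + 1 + (2*m+3)) mod 4 = 1" using mod_w[of "a + 1 + (2*m+3)" \<alpha> 5] aw by simp
    have I: "\<And>n. a+1 \<le> n \<Longrightarrow> n < c \<Longrightarrow> g n = F (2*m+3) n"
      using Inv_all[of m] big unfolding Inv_def cad(1) cad(2) by auto
    have "map g [a+1..<(a+1)+4*q+2] = concat (replicate q [1,0,0,1]) @ [1,0]"
      by (rule lp1[OF _ r]) (use I cq in auto)
    then show "sgs k (aseq k m + 1) (cseq k m - 1)
          = concat (replicate ((cseq k m - aseq k m - 3) div 4) [1,0,0,1]) @ [1,0]"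
      unfolding sgs_def cad(1)[symmetric] cad(2)[symmetric] e qq .
  qed
  show ?thesis using P1 P2 P3 P4 P5 P6 P7 by blast
qed



end
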